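(* For positive integers $c,r$ let $X_{c,r}$ denote the graph with vertex set $\{x_{i,j}:1\le i\le c,\ 1\le j\le r\}$ (where $i$ is the column and $j$ the row, row $1$ being the bottom row) in which $x_{i,j}x_{i',j'}$ is an edge if and only if $i'=i+1$ and $j\ge j'$. Let $n\ge 1$ and let $M,N$ be positive integers. Then every embedding (as an induced subgraph) of $X_{n,4n-1}$ into $X_{M,N}$ contains a copy of $X_{n,n}$ (an induced subgraph of the image isomorphic to $X_{n,n}$) that occupies exactly $n$ contiguous columns of $X_{M,N}$, with each column of this $X_{n,n}$ embedded into a single column of $X_{M,N}$.
   Context: An embedding of a graph $H$ into a graph $G$ is an injective map $\phi:V(H)\to V(G)$ with $uv\in E(H)$ if and only if $\phi(u)\phi(v)\in E(G)$. The graphs $X_{c,r}$ (called $X$-grids) are as defined in the claim; the column of a vertex $x_{i,j}$ is $i$. *)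

theory Defs
  imports Main
begin

text \<open>Vertex x_{i,j} is represented as the pair (i,j): i is the column, j the row.\<close>
definition xgrid_verts :: "nat \<Rightarrow> nat \<Rightarrow> (nat \<times> nat) set" where
  "xgrid_verts c r = {1..c} \<times> {1..r}"

definition xgrid_adj :: "nat \<times> nat \<Rightarrow> nat \<times> nat \<Rightarrow> bool" where
  "xgrid_adj u v \<longleftrightarrow>
     (fst v = fst u + 1 \<and> snd u \<ge> snd v) \<or> (fst u = fst v + 1 \<and> snd v \<ge> snd u)"

definition is_embedding ::
  "'a set \<Rightarrow> ('a \<Rightarrow> 'a \<Rightarrow> bool) \<Rightarrow> 'b set \<Rightarrow> ('b \<Rightarrow> 'b \<Rightarrow> bool) \<Rightarrow> ('a \<Rightarrow> 'b) \<Rightarrow> bool" where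
  "is_embedding VH EH VG EG \<phi> \<longleftrightarrow>
     inj_on \<phi> VH \<and> \<phi> ` VH \<subseteq> VG \<and>
     (\<forall>u\<in>VH. \<forall>v\<in>VH. EH u v \<longleftrightarrow> EG (\<phi> u) (\<phi> v))"

end

theory Submission
  imports Defs
begin

lemma geo_twin0:
  fixes a b' x1 y1 x2 y2 b :: nat
  assumes "x1 \<noteq> x2" "(x1 = a+1 \<and> y1 \<le> b) \<or> (a = x1+1 \<and> b \<le> y1)"
     "(x2 = a+1 \<and> y2 \<le> b) \<or> (a = x2+1 \<and> b \<le> y2)"
     "\<not>((x1 = a+1 \<and> y1 \<le> b') \<or> (a = x1+1 \<and> b' \<le> y1))"
     "\<not>((x2 = a+1 \<and> y2 \<le> b') \<or> (a = x2+1 \<and> b' \<le> y2))"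
  shows False
  using assms(2,3)
proof (elim disjE conjE)
qed (use assms in auto)

lemma geo_twin:
  assumes "fst u = fst v" "fst w1 \<noteq> fst w2" "xgrid_adj u w1" "xgrid_adj u w2"
    "\<not> xgrid_adj v w1" "\<not> xgrid_adj v w2"
  shows False
  using assms geo_twin0[of "fst w1" "fst w2" "fst u" "snd w1" "snd u" "snd w2" "snd v"]
  unfolding xgrid_adj_def by auto


lemma geo_nofold0:
  fixes xa xb ya yb yc yd :: nat
  assumes "(xb = xa+1 \<and> yb \<le> ya) \<or> (xa = xb+1 \<and> ya \<le> yb)"
    "(xa = xb+1 \<and> yd \<le> yc) \<or> (xb = xa+1 \<and> yc \<le> yd)"
    "\<not>((xb = xa+1 \<and> yc \<le> ya) \<or> (xa = xb+1 \<and> ya \<le> yc))"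
    "\<not>((xa = xb+1 \<and> yd \<le> yb) \<or> (xb = xa+1 \<and> yb \<le> yd))"
  shows False
  using assms(1,2)
proof (elim disjE conjE)
qed (use assms in auto)

lemma geo_nofold:
  assumes "xgrid_adj A B" "xgrid_adj C D" "\<not> xgrid_adj A C" "\<not> xgrid_adj B D"
    "fst A = fst D" "fst B = fst C"
  shows False
  using assms geo_nofold0[of "fst B" "fst A" "snd B" "snd A" "snd D" "snd C"]
  unfolding xgrid_adj_def by auto

lemma geo_K22_0:
  fixes xa1 xa2 xb1 xb2 :: nat
  assumes "xb1 = xa1+1 \<or> xa1 = xb1+1" "xb2 = xa1+1 \<or> xa1 = xb2+1"
    "xb1 = xa2+1 \<or> xa2 = xb1+1" "xb2 = xa2+1 \<or> xa2 = xb2+1" "xa1 \<noteq> xa2"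
  shows "xb1 = xb2"
  using assms by (elim disjE; linarith)

lemma adj_col: "xgrid_adj x y \<Longrightarrow> fst y = fst x + 1 \<or> fst x = fst y + 1"
  unfolding xgrid_adj_def by auto

lemma geo_K22:
  assumes "xgrid_adj a1 b1" "xgrid_adj a1 b2" "xgrid_adj a2 b1" "xgrid_adj a2 b2" "fst a1 \<noteq> fst a2"
  shows "fst b1 = fst b2"
  using geo_K22_0[OF adj_col[OF assms(1)] adj_col[OF assms(2)] adj_col[OF assms(3)] adj_col[OF assms(4)] assms(5)] .

definition brk :: "(nat \<times> nat \<Rightarrow> nat \<times> nat) \<Rightarrow> nat \<Rightarrow> nat \<Rightarrow> bool" where
  "brk \<phi> i p \<longleftrightarrow> fst (\<phi> (i,p)) \<noteq> fst (\<phi> (i, Suc p))"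

definition cst :: "(nat \<times> nat \<Rightarrow> nat \<times> nat) \<Rightarrow> nat \<Rightarrow> nat \<Rightarrow> bool" where
  "cst \<phi> R i \<longleftrightarrow> (\<forall>j\<in>{1..R}. fst (\<phi> (i,j)) = fst (\<phi> (i,1)))"

lemma nonconst_brk:
  assumes "\<not> cst \<phi> R i"
  shows "\<exists>p. 1 \<le> p \<and> p < R \<and> brk \<phi> i p"
proof (rule ccontr)
  assume H: "\<not> (\<exists>p. 1 \<le> p \<and> p < R \<and> brk \<phi> i p)"
  have "1 \<le> j \<longrightarrow> j \<le> R \<longrightarrow> fst (\<phi> (i,j)) = fst (\<phi> (i,1))" for j
  proof (induction j)
    case 0 then show ?case by simp
  next
    case (Suc j)
    show ?case
    proof (cases "j = 0")
      case True then show ?thesis by simp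
    next
      case False
      show ?thesis
      proof (intro impI)
        assume "1 \<le> Suc j" "Suc j \<le> R"
        then have "\<not> brk \<phi> i j" using H False by auto
        then show "fst (\<phi> (i, Suc j)) = fst (\<phi> (i, 1))"
          using Suc.IH False \<open>Suc j \<le> R\<close> by (simp add: brk_def)
      qed
    qed
  qed
  then have "cst \<phi> R i" unfolding cst_def by (meson atLeastAtMost_iff)
  with assms show False by simp
qed

lemma const_on:
  assumes "\<forall>p. s < p \<and> p < s + m \<longrightarrow> \<not> brk \<phi> i p"
  shows "1 \<le> j \<Longrightarrow> j \<le> m \<Longrightarrow> fst (\<phi> (i, s+j)) = fst (\<phi> (i, s+1))"
proof (induction j)
  case 0 thus ?case by simp
next
  case (Suc j)
  show ?case
  proof (cases "j = 0")
    case True thus ?thesis by simp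
  next
    case False
    then have "\<not> brk \<phi> i (s+j)" using assms Suc.prems by auto
    thus ?thesis using Suc False by (simp add: brk_def)
  qed
qed

lemma contig:
  fixes c :: "nat \<Rightarrow> nat"
  assumes n1: "1 \<le> n"
    and st: "\<forall>i. 1 \<le> i \<longrightarrow> Suc i \<le> n \<longrightarrow> c (Suc i) = c i + 1 \<or> c i = c (Suc i) + 1"
    and nf: "\<forall>i. 1 \<le> i \<longrightarrow> Suc (Suc i) \<le> n \<longrightarrow> c (Suc (Suc i)) \<noteq> c i"
    and pos: "\<forall>i. 1 \<le> i \<longrightarrow> i \<le> n \<longrightarrow> 1 \<le> c i"
  shows "\<exists>a. c ` {1..n} = {a+1..a+n}"
proof (cases "n = 1")
  case True
  then have "c ` {1..n} = {c 1 - 1 + 1 .. c 1 - 1 + n}" using pos by auto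
  then show ?thesis by blast
next
  case False
  then have n2: "2 \<le> n" using n1 by auto
  from st n2 have "c 2 = c 1 + 1 \<or> c 1 = c 2 + 1"
    by (metis Suc_1 le_numeral_extra(4) one_add_one plus_1_eq_Suc)
  then show ?thesis
  proof
    assume c2: "c 2 = c 1 + 1"
    have F: "1 \<le> i \<longrightarrow> i \<le> n \<longrightarrow> c i = c 1 + (i - 1)" for i
    proof (induction i rule: less_induct)
      case (less i)
      show ?case
      proof (cases "i \<le> 2")
        case True
        then have "i = 0 \<or> i = 1 \<or> i = 2" by auto
        then show ?thesis using c2 by auto
      next
        case False
        define k where "k = i - 2"
        have k: "i = Suc (Suc k)" "1 \<le> k" using False unfolding k_def by arith+
        show ?thesis
        proof (intro impI)
          assume "1 \<le> i" "i \<le> n"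
          have h1: "c (Suc k) = c 1 + k" using less.IH[of "Suc k"] k \<open>i \<le> n\<close> by auto
          have h0: "c k = c 1 + (k - 1)" using less.IH[of k] k \<open>i \<le> n\<close> by auto
          have "c (Suc (Suc k)) = c (Suc k) + 1 \<or> c (Suc k) = c (Suc (Suc k)) + 1"
            using st k \<open>i \<le> n\<close> by auto
          moreover have "c (Suc (Suc k)) \<noteq> c k" using nf k \<open>i \<le> n\<close> by auto
          ultimately show "c i = c 1 + (i - 1)" using h1 h0 k by auto
        qed
      qed
    qed
    have "c ` {1..n} = {c 1 - 1 + 1 .. c 1 - 1 + n}"
    proof
      show "c ` {1..n} \<subseteq> {c 1 - 1 + 1 .. c 1 - 1 + n}"
      proof
        fix v assume "v \<in> c ` {1..n}"
        then obtain i where i: "i \<in> {1..n}" "v = c i" by auto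
        have "c i = c 1 + (i - 1)" using F[of i] i by auto
        moreover have "1 \<le> c 1" using pos n1 by auto
        ultimately show "v \<in> {c 1 - 1 + 1 .. c 1 - 1 + n}" using i by auto
      qed
    next
      show "{c 1 - 1 + 1 .. c 1 - 1 + n} \<subseteq> c ` {1..n}"
      proof
        fix v assume v: "v \<in> {c 1 - 1 + 1 .. c 1 - 1 + n}"
        have p1: "1 \<le> c 1" using pos n1 by auto
        let ?i = "v - c 1 + 1"
        have "?i \<in> {1..n}" using v p1 by auto
        moreover have "c ?i = v" using F[of ?i] v p1 by auto
        ultimately show "v \<in> c ` {1..n}" by force
      qed
    qed
    then show ?thesis by blast
  next
    assume c2: "c 1 = c 2 + 1"
    have F: "1 \<le> i \<longrightarrow> i \<le> n \<longrightarrow> c i + (i - 1) = c 1" for i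
    proof (induction i rule: less_induct)
      case (less i)
      show ?case
      proof (cases "i \<le> 2")
        case True
        then have "i = 0 \<or> i = 1 \<or> i = 2" by auto
        then show ?thesis using c2 by auto
      next
        case False
        define k where "k = i - 2"
        have k: "i = Suc (Suc k)" "1 \<le> k" using False unfolding k_def by arith+
        show ?thesis
        proof (intro impI)
          assume "1 \<le> i" "i \<le> n"
          have h1: "c (Suc k) + k = c 1" using less.IH[of "Suc k"] k \<open>i \<le> n\<close> by auto
          have h0: "c k + (k - 1) = c 1" using less.IH[of k] k \<open>i \<le> n\<close> by auto
          have "c (Suc (Suc k)) = c (Suc k) + 1 \<or> c (Suc k) = c (Suc (Suc k)) + 1"
            using st k \<open>i \<le> n\<close> by auto
          moreover have "c (Suc (Suc k)) \<noteq> c k" using nf k \<open>i \<le> n\<close> by auto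
          ultimately show "c i + (i - 1) = c 1" using h1 h0 k by auto
        qed
      qed
    qed
    have cn: "1 \<le> c n" using pos n1 by auto
    have cn2: "c n + (n - 1) = c 1" using F[of n] n1 by auto
    have "c ` {1..n} = {c 1 - n + 1 .. c 1 - n + n}"
    proof
      show "c ` {1..n} \<subseteq> {c 1 - n + 1 .. c 1 - n + n}"
      proof
        fix v assume "v \<in> c ` {1..n}"
        then obtain i where i: "i \<in> {1..n}" "v = c i" by auto
        have "c i + (i - 1) = c 1" using F[of i] i by auto
        then show "v \<in> {c 1 - n + 1 .. c 1 - n + n}" using i cn cn2 by auto
      qed
    next
      show "{c 1 - n + 1 .. c 1 - n + n} \<subseteq> c ` {1..n}"
      proof
        fix v assume v: "v \<in> {c 1 - n + 1 .. c 1 - n + n}"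
        let ?i = "c 1 - v + 1"
        have "?i \<in> {1..n}" using v cn cn2 by auto
        moreover have "c ?i = v" using F[of ?i] v cn cn2 by auto
        ultimately show "v \<in> c ` {1..n}" by force
      qed
    qed
    then show ?thesis by blast
  qed
qed


lemma adj_shift: "xgrid_adj (i,j) (i',j') \<longleftrightarrow> xgrid_adj (i, s+j) (i', s+j')"
  unfolding xgrid_adj_def by auto

lemma cstD: "cst \<phi> R i \<Longrightarrow> 1 \<le> j \<Longrightarrow> j \<le> R \<Longrightarrow> fst (\<phi> (i,j)) = fst (\<phi> (i,1))"
  unfolding cst_def by (meson atLeastAtMost_iff)

context
  fixes n R M N :: nat and \<phi> :: "nat \<times> nat \<Rightarrow> nat \<times> nat"
  assumes emb: "is_embedding (xgrid_verts n R) xgrid_adj (xgrid_verts M N) xgrid_adj \<phi>"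
begin

lemma eadj:
  assumes "1 \<le> i" "i \<le> n" "1 \<le> j" "j \<le> R" "1 \<le> i'" "i' \<le> n" "1 \<le> j'" "j' \<le> R"
  shows "xgrid_adj (\<phi> (i,j)) (\<phi> (i',j')) \<longleftrightarrow> xgrid_adj (i,j) (i',j')"
proof -
  have "(i,j) \<in> xgrid_verts n R" "(i',j') \<in> xgrid_verts n R"
    using assms by (simp_all add: xgrid_verts_def)
  then show ?thesis using emb unfolding is_embedding_def by blast
qed

lemma eadj_eval:
  assumes "1 \<le> i" "i \<le> n" "1 \<le> j" "j \<le> R" "1 \<le> i'" "i' \<le> n" "1 \<le> j'" "j' \<le> R"
  shows "xgrid_adj (\<phi> (i,j)) (\<phi> (i',j')) \<longleftrightarrow> ((i' = i+1 \<and> j' \<le> j) \<or> (i = i'+1 \<and> j \<le> j'))"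
  using eadj[OF assms] unfolding xgrid_adj_def by simp

lemma F1:
  assumes b1: "brk \<phi> i p" and b2: "brk \<phi> (Suc i) q" and "1 \<le> i" "Suc i \<le> n"
    "1 \<le> p" "p < R" "1 \<le> q" "q < R"
  shows "p \<le> q \<and> q \<le> Suc p"
proof (rule ccontr)
  assume "\<not> (p \<le> q \<and> q \<le> Suc p)"
  then consider "Suc q \<le> p" | "Suc (Suc p) \<le> q" by linarith
  then show False
  proof cases
    case 1
    have a: "xgrid_adj (\<phi>(i,p)) (\<phi>(Suc i,q))" "xgrid_adj (\<phi>(i,p)) (\<phi>(Suc i,Suc q))"
            "xgrid_adj (\<phi>(i,Suc p)) (\<phi>(Suc i,q))" "xgrid_adj (\<phi>(i,Suc p)) (\<phi>(Suc i,Suc q))"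
      using 1 assms by (simp_all add: eadj_eval)
    have "fst (\<phi>(Suc i,q)) = fst (\<phi>(Suc i,Suc q))"
      using geo_K22[OF a] b1 unfolding brk_def by blast
    with b2 show False by (simp add: brk_def)
  next
    case 2
    have a: "xgrid_adj (\<phi>(i,p)) (\<phi>(Suc i,1))" "xgrid_adj (\<phi>(i,Suc p)) (\<phi>(Suc i,1))"
      "xgrid_adj (\<phi>(i,Suc q)) (\<phi>(Suc i,1))"
      "xgrid_adj (\<phi>(i,Suc q)) (\<phi>(Suc i,q))" "xgrid_adj (\<phi>(i,Suc q)) (\<phi>(Suc i,Suc q))"
      "\<not> xgrid_adj (\<phi>(i,p)) (\<phi>(Suc i,q))" "\<not> xgrid_adj (\<phi>(i,p)) (\<phi>(Suc i,Suc q))"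
      "\<not> xgrid_adj (\<phi>(i,Suc p)) (\<phi>(Suc i,q))" "\<not> xgrid_adj (\<phi>(i,Suc p)) (\<phi>(Suc i,Suc q))"
      using 2 assms by (simp_all add: eadj_eval)
    have c1: "fst (\<phi>(Suc i,1)) = fst (\<phi>(i,p)) + 1 \<or> fst (\<phi>(i,p)) = fst (\<phi>(Suc i,1)) + 1"
      using adj_col[OF a(1)] .
    have c2: "fst (\<phi>(Suc i,1)) = fst (\<phi>(i,Suc p)) + 1 \<or> fst (\<phi>(i,Suc p)) = fst (\<phi>(Suc i,1)) + 1"
      using adj_col[OF a(2)] .
    have c3: "fst (\<phi>(Suc i,1)) = fst (\<phi>(i,Suc q)) + 1 \<or> fst (\<phi>(i,Suc q)) = fst (\<phi>(Suc i,1)) + 1"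
      using adj_col[OF a(3)] .
    have ne: "fst (\<phi>(i,p)) \<noteq> fst (\<phi>(i,Suc p))" using b1 by (simp add: brk_def)
    have ne2: "fst (\<phi>(Suc i,q)) \<noteq> fst (\<phi>(Suc i,Suc q))" using b2 by (simp add: brk_def)
    have "fst (\<phi>(i,Suc q)) = fst (\<phi>(i,p)) \<or> fst (\<phi>(i,Suc q)) = fst (\<phi>(i,Suc p))"
      using c1 c2 c3 ne by linarith
    then show False
    proof
      assume e: "fst (\<phi>(i,Suc q)) = fst (\<phi>(i,p))"
      show False using geo_twin[OF e ne2 a(4) a(5) a(6) a(7)] .
    next
      assume e: "fst (\<phi>(i,Suc q)) = fst (\<phi>(i,Suc p))"
      show False using geo_twin[OF e ne2 a(4) a(5) a(8) a(9)] .
    qed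
  qed
qed

lemma F2:
  assumes b1: "brk \<phi> i p" and c: "cst \<phi> R (Suc i)" and "1 \<le> i" "Suc i \<le> n"
    "1 \<le> p" "p + 2 \<le> R"
  shows False
proof -
  have a: "xgrid_adj (\<phi>(Suc i,p)) (\<phi>(i,p))" "xgrid_adj (\<phi>(Suc i,p)) (\<phi>(i,Suc p))"
    "\<not> xgrid_adj (\<phi>(Suc i,p+2)) (\<phi>(i,p))" "\<not> xgrid_adj (\<phi>(Suc i,p+2)) (\<phi>(i,Suc p))"
    using assms by (simp_all add: eadj_eval)
  have e: "fst (\<phi>(Suc i,p)) = fst (\<phi>(Suc i,p+2))"
    using cstD[OF c, of p] cstD[OF c, of "p+2"] assms by simp
  have ne: "fst (\<phi>(i,p)) \<noteq> fst (\<phi>(i,Suc p))" using b1 by (simp add: brk_def)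
  show False using geo_twin[OF e ne a] .
qed

lemma F3:
  assumes b1: "brk \<phi> (Suc i) q" and c: "cst \<phi> R i" and "1 \<le> i" "Suc i \<le> n"
    "2 \<le> q" "q < R"
  shows False
proof -
  have a: "xgrid_adj (\<phi>(i,Suc q)) (\<phi>(Suc i,q))" "xgrid_adj (\<phi>(i,Suc q)) (\<phi>(Suc i,Suc q))"
    "\<not> xgrid_adj (\<phi>(i,q-1)) (\<phi>(Suc i,q))" "\<not> xgrid_adj (\<phi>(i,q-1)) (\<phi>(Suc i,Suc q))"
    using assms by (simp_all add: eadj_eval)
  have e: "fst (\<phi>(i,Suc q)) = fst (\<phi>(i,q-1))"
    using cstD[OF c, of "Suc q"] cstD[OF c, of "q-1"] assms by simp
  have ne: "fst (\<phi>(Suc i,q)) \<noteq> fst (\<phi>(Suc i,Suc q))" using b1 by (simp add: brk_def)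
  show False using geo_twin[OF e ne a] .
qed

lemma A1:
  assumes c: "cst \<phi> R k" and kn: "k \<le> n"
  shows "\<forall>i p. 1 \<le> i \<longrightarrow> i + Suc d = k \<longrightarrow> 1 \<le> p \<longrightarrow> p < R \<longrightarrow> brk \<phi> i p \<longrightarrow> R \<le> p + Suc d"
proof (induction d)
  case 0
  show ?case
  proof (intro allI impI)
    fix i p assume h: "1 \<le> i" "i + Suc 0 = k" "1 \<le> p" "p < R" "brk \<phi> i p"
    show "R \<le> p + Suc 0"
    proof (rule ccontr)
      assume "\<not> R \<le> p + Suc 0"
      then have "p + 2 \<le> R" by simp
      moreover have "cst \<phi> R (Suc i)" using c h by simp
      ultimately show False using F2[of i p] h kn by simp
    qed
  qed
next
  case (Suc d)
  show ?case
  proof (intro allI impI)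
    fix i p assume h: "1 \<le> i" "i + Suc (Suc d) = k" "1 \<le> p" "p < R" "brk \<phi> i p"
    show "R \<le> p + Suc (Suc d)"
    proof (cases "cst \<phi> R (Suc i)")
      case True
      have "\<not> p + 2 \<le> R" using F2[of i p] True h kn by auto
      then show ?thesis by simp
    next
      case False
      then obtain q where q: "1 \<le> q" "q < R" "brk \<phi> (Suc i) q" using nonconst_brk by blast
      have "R \<le> q + Suc d" using Suc.IH q h by auto
      moreover have "q \<le> Suc p" using F1[of i p q] h q kn by auto
      ultimately show ?thesis by simp
    qed
  qed
qed

lemma A2:
  assumes c: "cst \<phi> R k" and k1: "1 \<le> k"
  shows "\<forall>i p. k + Suc d = i \<longrightarrow> i \<le> n \<longrightarrow> 1 \<le> p \<longrightarrow> p < R \<longrightarrow> brk \<phi> i p \<longrightarrow> p \<le> Suc d"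
proof (induction d)
  case 0
  show ?case
  proof (intro allI impI)
    fix i p assume h: "k + Suc 0 = i" "i \<le> n" "1 \<le> p" "p < R" "brk \<phi> i p"
    show "p \<le> Suc 0"
    proof (rule ccontr)
      assume "\<not> p \<le> Suc 0"
      then show False using F3[of k p] h c k1 by simp
    qed
  qed
next
  case (Suc d)
  show ?case
  proof (intro allI impI)
    fix i p assume h: "k + Suc (Suc d) = i" "i \<le> n" "1 \<le> p" "p < R" "brk \<phi> i p"
    define i' where "i' = k + Suc d"
    have ii: "i = Suc i'" using h i'_def by simp
    show "p \<le> Suc (Suc d)"
    proof (cases "cst \<phi> R i'")
      case True
      have "\<not> 2 \<le> p" using F3[of i' p] True h ii k1 i'_def by auto
      then show ?thesis by simp
    next
      case False
      then obtain q where q: "1 \<le> q" "q < R" "brk \<phi> i' q" using nonconst_brk by blast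
      have "q \<le> Suc d" using Suc.IH q h i'_def by auto
      moreover have "p \<le> Suc q" using F1[of i' q p] h q ii k1 i'_def by auto
      ultimately show ?thesis by simp
    qed
  qed
qed

lemma Bcase:
  assumes n2: "2 \<le> n" and nc: "\<forall>i. 1 \<le> i \<longrightarrow> i \<le> n \<longrightarrow> \<not> cst \<phi> R i"
    and p1: "1 \<le> p1" "p1 < R" "brk \<phi> 1 p1"
  shows "1 \<le> i \<longrightarrow> i \<le> n \<longrightarrow> (\<forall>p. 1 \<le> p \<longrightarrow> p < R \<longrightarrow> brk \<phi> i p \<longrightarrow> p1 \<le> Suc p \<and> p \<le> p1 + i)"
proof (induction i)
  case 0 then show ?case by simp
next
  case (Suc i)
  show ?case
  proof (intro impI allI)
    fix p assume h: "1 \<le> Suc i" "Suc i \<le> n" "1 \<le> p" "p < R" "brk \<phi> (Suc i) p"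
    show "p1 \<le> Suc p \<and> p \<le> p1 + Suc i"
    proof (cases "i = 0")
      case True
      have "\<not> cst \<phi> R 2" using nc n2 by simp
      then obtain q where q: "1 \<le> q" "q < R" "brk \<phi> (Suc 1) q" using nonconst_brk
        by (metis Suc_1)
      have "p1 \<le> q \<and> q \<le> Suc p1" using F1[of 1 p1 q] p1 q n2 by auto
      moreover have "p \<le> q \<and> q \<le> Suc p" using F1[of 1 p q] h q n2 True by auto
      ultimately show ?thesis using True by simp
    next
      case False
      have "\<not> cst \<phi> R i" using nc False h by simp
      then obtain q where q: "1 \<le> q" "q < R" "brk \<phi> i q" using nonconst_brk by blast
      have "p1 \<le> Suc q \<and> q \<le> p1 + i" using Suc.IH q False h by auto
      moreover have "q \<le> p \<and> p \<le> Suc q" using F1[of i q p] h q False by auto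
      ultimately show ?thesis by simp
    qed
  qed
qed

lemma exists_s:
  assumes n2: "2 \<le> n" and R: "R = 4*n - 1"
  shows "\<exists>s. s + n \<le> R \<and> (\<forall>i. 1 \<le> i \<longrightarrow> i \<le> n \<longrightarrow> (\<forall>p. s < p \<and> p < s + n \<longrightarrow> \<not> brk \<phi> i p))"
proof (cases "\<exists>k. 1 \<le> k \<and> k \<le> n \<and> cst \<phi> R k")
  case True
  then obtain k where k: "1 \<le> k" "k \<le> n" "cst \<phi> R k" by blast
  have "\<forall>i. 1 \<le> i \<longrightarrow> i \<le> n \<longrightarrow> (\<forall>p. n - 1 < p \<and> p < n - 1 + n \<longrightarrow> \<not> brk \<phi> i p)"
  proof (intro allI impI notI)
    fix i p assume h: "1 \<le> i" "i \<le> n" "n - 1 < p \<and> p < n - 1 + n" "brk \<phi> i p"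
    have pR: "1 \<le> p" "p < R" "Suc p \<le> R" using h R n2 by auto
    consider "i < k" | "i = k" | "k < i" by linarith
    then show False
    proof cases
      case 1
      have "R \<le> p + Suc (k - i - 1)"
        using A1[OF k(3) k(2), of "k - i - 1"] h pR 1 by auto
      then show False using h R 1 k by auto
    next
      case 2
      have "fst (\<phi> (k,p)) = fst (\<phi> (k,1))" "fst (\<phi> (k,Suc p)) = fst (\<phi> (k,1))"
        using cstD[OF k(3), of p] cstD[OF k(3), of "Suc p"] pR by auto
      then show False using h 2 by (simp add: brk_def)
    next
      case 3
      have "p \<le> Suc (i - k - 1)"
        using A2[OF k(3) k(1), of "i - k - 1"] h pR 3 by auto
      then show False using h 3 k by auto
    qed
  qed
  moreover have "n - 1 + n \<le> R" using R n2 by auto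
  ultimately show ?thesis by blast
next
  case False
  then have nc: "\<forall>i. 1 \<le> i \<longrightarrow> i \<le> n \<longrightarrow> \<not> cst \<phi> R i" by blast
  then obtain p1 where p1: "1 \<le> p1" "p1 < R" "brk \<phi> 1 p1" using nonconst_brk n2 by fastforce
  note B = Bcase[OF n2 nc p1]
  show ?thesis
  proof (cases "n + 1 \<le> p1")
    case True
    have "\<forall>i. 1 \<le> i \<longrightarrow> i \<le> n \<longrightarrow> (\<forall>p. 0 < p \<and> p < 0 + n \<longrightarrow> \<not> brk \<phi> i p)"
    proof (intro allI impI notI)
      fix i p assume h: "1 \<le> i" "i \<le> n" "0 < p \<and> p < 0 + n" "brk \<phi> i p"
      have "p < R" using h R by auto
      then have "p1 \<le> Suc p" using B[of i] h by auto
      then show False using True h by auto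
    qed
    moreover have "0 + n \<le> R" using R n2 by auto
    ultimately show ?thesis by blast
  next
    case False
    have "\<forall>i. 1 \<le> i \<longrightarrow> i \<le> n \<longrightarrow> (\<forall>p. p1 + n < p \<and> p < p1 + n + n \<longrightarrow> \<not> brk \<phi> i p)"
    proof (intro allI impI notI)
      fix i p assume h: "1 \<le> i" "i \<le> n" "p1 + n < p \<and> p < p1 + n + n" "brk \<phi> i p"
      have "p < R" using h R False by auto
      then have "p \<le> p1 + i" using B[of i] h by auto
      then show False using h by auto
    qed
    moreover have "p1 + n + n \<le> R" using R n2 False by auto
    ultimately show ?thesis by blast
  qed
qed

end


theorem lemma8:
  fixes n M N :: nat and \<phi> :: "nat \<times> nat \<Rightarrow> nat \<times> nat"
  assumes "n \<ge> 1" and "M \<ge> 1" and "N \<ge> 1"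
    and "is_embedding (xgrid_verts n (4*n - 1)) xgrid_adj (xgrid_verts M N) xgrid_adj \<phi>"
  shows "\<exists>\<psi> a. is_embedding (xgrid_verts n n) xgrid_adj (xgrid_verts M N) xgrid_adj \<psi>
            \<and> \<psi> ` xgrid_verts n n \<subseteq> \<phi> ` xgrid_verts n (4*n - 1)
            \<and> fst ` \<psi> ` xgrid_verts n n = {a+1..a+n}
            \<and> (\<forall>i\<in>{1..n}. \<forall>j\<in>{1..n}. \<forall>j'\<in>{1..n}. fst (\<psi> (i,j)) = fst (\<psi> (i,j')))"
proof -
  note emb = assms(4)
  have n1: "1 \<le> n" using assms(1) .
  obtain s where s: "s + n \<le> 4*n - 1"
    "\<forall>i. 1 \<le> i \<longrightarrow> i \<le> n \<longrightarrow> (\<forall>p. s < p \<and> p < s + n \<longrightarrow> \<not> brk \<phi> i p)"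
  proof (cases "n = 1")
    case True then show ?thesis using that[of 0] by auto
  next
    case False then have n2: "2 \<le> n" using n1 by auto
    show ?thesis using exists_s[OF emb n2 refl] that by blast
  qed
  define \<psi> where "\<psi> = (\<lambda>x. \<phi> (fst x, s + snd x))"
  define c where "c = (\<lambda>i. fst (\<phi> (i, s+1)))"
  have col: "fst (\<psi> (i,j)) = c i" if "1 \<le> i" "i \<le> n" "1 \<le> j" "j \<le> n" for i j
  proof -
    have "\<forall>p. s < p \<and> p < s + n \<longrightarrow> \<not> brk \<phi> i p" using s(2) that by auto
    from const_on[OF this, of j] that show ?thesis unfolding \<psi>_def c_def by simp
  qed
  have inVH: "(fst x, s + snd x) \<in> xgrid_verts n (4*n - 1)" if "x \<in> xgrid_verts n n" for x
    using that s(1) unfolding xgrid_verts_def by auto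
  have embP: "inj_on \<phi> (xgrid_verts n (4*n - 1))" "\<phi> ` xgrid_verts n (4*n - 1) \<subseteq> xgrid_verts M N"
    "\<forall>u\<in>xgrid_verts n (4*n - 1). \<forall>v\<in>xgrid_verts n (4*n - 1). xgrid_adj u v = xgrid_adj (\<phi> u) (\<phi> v)"
    using emb unfolding is_embedding_def by auto
  have E: "is_embedding (xgrid_verts n n) xgrid_adj (xgrid_verts M N) xgrid_adj \<psi>"
    unfolding is_embedding_def
  proof (intro conjI)
    show "inj_on \<psi> (xgrid_verts n n)"
    proof (rule inj_onI)
      fix x y assume x: "x \<in> xgrid_verts n n" and y: "y \<in> xgrid_verts n n" and e: "\<psi> x = \<psi> y"
      have "(fst x, s + snd x) = (fst y, s + snd y)"
        using inj_onD[OF embP(1) _ inVH[OF x] inVH[OF y]] e unfolding \<psi>_def by simp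
      then show "x = y" by (simp add: prod_eq_iff)
    qed
  next
    show "\<psi> ` xgrid_verts n n \<subseteq> xgrid_verts M N"
      using embP(2) inVH unfolding \<psi>_def by blast
  next
    show "\<forall>u\<in>xgrid_verts n n. \<forall>v\<in>xgrid_verts n n. xgrid_adj u v = xgrid_adj (\<psi> u) (\<psi> v)"
    proof (intro ballI)
      fix u v assume u: "u \<in> xgrid_verts n n" and v: "v \<in> xgrid_verts n n"
      have "xgrid_adj u v = xgrid_adj (fst u, s + snd u) (fst v, s + snd v)"
        using adj_shift[of "fst u" "snd u" "fst v" "snd v" s] by simp
      also have "\<dots> = xgrid_adj (\<psi> u) (\<psi> v)"
        using embP(3) inVH[OF u] inVH[OF v] unfolding \<psi>_def by blast
      finally show "xgrid_adj u v = xgrid_adj (\<psi> u) (\<psi> v)" .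
    qed
  qed
  have sub: "\<psi> ` xgrid_verts n n \<subseteq> \<phi> ` xgrid_verts n (4*n - 1)"
    using inVH unfolding \<psi>_def by blast
  have img: "fst ` \<psi> ` xgrid_verts n n = c ` {1..n}"
  proof
    show "fst ` \<psi> ` xgrid_verts n n \<subseteq> c ` {1..n}"
    proof
      fix v assume "v \<in> fst ` \<psi> ` xgrid_verts n n"
      then obtain i j where ij: "(i,j) \<in> xgrid_verts n n" "v = fst (\<psi> (i,j))" by auto
      then have "1 \<le> i" "i \<le> n" "1 \<le> j" "j \<le> n" unfolding xgrid_verts_def by auto
      then show "v \<in> c ` {1..n}" using col ij(2) by auto
    qed
  next
    show "c ` {1..n} \<subseteq> fst ` \<psi> ` xgrid_verts n n"
    proof
      fix v assume "v \<in> c ` {1..n}"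
      then obtain i where i: "1 \<le> i" "i \<le> n" "v = c i" by auto
      have "(i,1) \<in> xgrid_verts n n" using i n1 unfolding xgrid_verts_def by auto
      moreover have "fst (\<psi> (i,1)) = v" using col[of i 1] i n1 by simp
      ultimately show "v \<in> fst ` \<psi> ` xgrid_verts n n" by force
    qed
  qed
  have R1: "s + 1 \<le> 4*n - 1" using s(1) n1 by auto
  have st: "\<forall>i. 1 \<le> i \<longrightarrow> Suc i \<le> n \<longrightarrow> c (Suc i) = c i + 1 \<or> c i = c (Suc i) + 1"
  proof (intro allI impI)
    fix i assume i: "1 \<le> i" "Suc i \<le> n"
    have "xgrid_adj (\<phi> (i, s+1)) (\<phi> (Suc i, s+1))"
      using eadj_eval[OF emb, of i "s+1" "Suc i" "s+1"] i R1 by simp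
    from adj_col[OF this] show "c (Suc i) = c i + 1 \<or> c i = c (Suc i) + 1" unfolding c_def .
  qed
  have nf: "\<forall>i. 1 \<le> i \<longrightarrow> Suc (Suc i) \<le> n \<longrightarrow> c (Suc (Suc i)) \<noteq> c i"
  proof (intro allI impI notI)
    fix i assume i: "1 \<le> i" "Suc (Suc i) \<le> n" and e: "c (Suc (Suc i)) = c i"
    have R2: "s + 2 \<le> 4*n - 1" using s(1) i by auto
    have a: "xgrid_adj (\<phi> (i, s+1)) (\<phi> (Suc i, s+1))" "xgrid_adj (\<phi> (Suc i, s+2)) (\<phi> (Suc (Suc i), s+2))"
      "\<not> xgrid_adj (\<phi> (i, s+1)) (\<phi> (Suc i, s+2))" "\<not> xgrid_adj (\<phi> (Suc i, s+1)) (\<phi> (Suc (Suc i), s+2))"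
      using eadj_eval[OF emb, of i "s+1" "Suc i" "s+1"] eadj_eval[OF emb, of "Suc i" "s+2" "Suc (Suc i)" "s+2"]
        eadj_eval[OF emb, of i "s+1" "Suc i" "s+2"] eadj_eval[OF emb, of "Suc i" "s+1" "Suc (Suc i)" "s+2"]
        i R1 R2 by auto
    have d: "fst (\<phi> (Suc (Suc i), s+2)) = c (Suc (Suc i))" "fst (\<phi> (Suc i, s+2)) = c (Suc i)"
      using col[of "Suc (Suc i)" 2] col[of "Suc i" 2] i unfolding \<psi>_def by auto
    show False
      using geo_nofold[OF a] d e unfolding c_def by simp
  qed
  have pos: "\<forall>i. 1 \<le> i \<longrightarrow> i \<le> n \<longrightarrow> 1 \<le> c i"
  proof (intro allI impI)
    fix i assume i: "1 \<le> i" "i \<le> n"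
    have "(i, s+1) \<in> xgrid_verts n (4*n - 1)" using i R1 unfolding xgrid_verts_def by auto
    then have "\<phi> (i, s+1) \<in> xgrid_verts M N" using embP(2) by blast
    then show "1 \<le> c i" unfolding c_def xgrid_verts_def by auto
  qed
  obtain a where a: "c ` {1..n} = {a+1..a+n}" using contig[OF n1 st nf pos] by blast
  have cols: "\<forall>i\<in>{1..n}. \<forall>j\<in>{1..n}. \<forall>j'\<in>{1..n}. fst (\<psi> (i,j)) = fst (\<psi> (i,j'))"
    using col by auto
  show ?thesis using E sub img a cols by metis
qed

end
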